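(* Let $\mathcal{P}$ be a convex polytope in $\mathbb{R}^n$ symmetric about the origin with nonempty interior, and let $G_{\mathcal{P}}$ be an induced subgraph of $G(\mathbb{R}^n,\Vert\cdot\Vert_{\mathcal{P}})$ with vertex set $V$. Assume there is a graph $\tilde G$ with vertex set $V$ such that for all $x,y\in V$, $\tilde d(x,y)=2$ implies $\Vert x-y\Vert_{\mathcal{P}}=1$. Let $A\subset V$ avoid polytope distance $1$ (i.e. $\Vert x-y\Vert_{\mathcal{P}}\neq1$ for all $x,y\in A$). Then $A$ can be written as a union $A=\bigcup_{C\in\mathcal{C}}C$ of cliques of $\tilde G$ such that $N[C]\cap N[C']=\emptyset$ for all distinct $C,C'\in\mathcal{C}$.
   Context: $\Vert x\Vert_{\mathcal{P}}=\inf\{\lambda\geq0:x\in\lambda\mathcal{P}\}$. $G(\mathbb{R}^n,\Vert\cdot\Vert)$ is the graph on $\mathbb{R}^n$ with $x,y$ adjacent iff $\Vert x-y\Vert=1$. $\tilde d$ denotes graph distance in $\tilde G$. A clique of $\tilde G$ is a set $C\subset V$ any two distinct elements of which are adjacent in $\tilde G$. For $C\subset V$, its closed neighborhood is $N[C]=\{v\in V:\tilde d(v,C)\leq1\}$. *)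

theory Defs
  imports "HOL-Analysis.Analysis" "HOL-Library.Extended_Nat"
begin

definition poly_norm :: "('a::real_vector) set \<Rightarrow> 'a \<Rightarrow> real" where
  "poly_norm P x = Inf {l::real. l \<ge> 0 \<and> x \<in> (\<lambda>p. l *\<^sub>R p) ` P}"

definition simple_graph :: "'a set \<Rightarrow> ('a \<Rightarrow> 'a \<Rightarrow> bool) \<Rightarrow> bool" where
  "simple_graph V E \<longleftrightarrow> (\<forall>x y. E x y \<longrightarrow> x \<in> V \<and> y \<in> V) \<and>
     (\<forall>x y. E x y \<longrightarrow> E y x) \<and> (\<forall>x. \<not> E x x)"

definition gdist :: "('a \<Rightarrow> 'a \<Rightarrow> bool) \<Rightarrow> 'a \<Rightarrow> 'a \<Rightarrow> enat" where
  "gdist E x y = (if \<exists>n. (E ^^ n) x y then enat (LEAST n. (E ^^ n) x y) else \<infinity>)"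

definition is_clique :: "'a set \<Rightarrow> ('a \<Rightarrow> 'a \<Rightarrow> bool) \<Rightarrow> 'a set \<Rightarrow> bool" where
  "is_clique V E C \<longleftrightarrow> C \<subseteq> V \<and> (\<forall>x\<in>C. \<forall>y\<in>C. x \<noteq> y \<longrightarrow> E x y)"

definition closed_nbhd :: "'a set \<Rightarrow> ('a \<Rightarrow> 'a \<Rightarrow> bool) \<Rightarrow> 'a set \<Rightarrow> 'a set" where
  "closed_nbhd V E C = {v \<in> V. \<exists>c\<in>C. gdist E v c \<le> 1}"

end

theory Submission
  imports Defs
begin

lemma relpow_0_iff: "(E ^^ 0) x y \<longleftrightarrow> x = y"
  by simp


lemma gdist_le1: "gdist E x y \<le> 1 \<Longrightarrow> x = y \<or> E x y"
proof -
  assume a: "gdist E x y \<le> 1"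
  then have ex: "\<exists>n. (E ^^ n) x y"
    unfolding gdist_def by (cases "\<exists>n. (E ^^ n) x y") auto
  define m where "m = (LEAST n. (E ^^ n) x y)"
  have pm: "(E ^^ m) x y" unfolding m_def using ex by (metis LeastI)
  have "m \<le> 1" using a ex unfolding gdist_def m_def by (simp add: one_enat_def)
  then have "m = 0 \<or> m = 1" by auto
  then show ?thesis using pm by auto
qed

lemma gdist_2:
  assumes "x \<noteq> y" "\<not> E x y" "E x v" "E v y"
  shows "gdist E x y = 2"
proof -
  have p2: "(E ^^ 2) x y"
  proof -
    have "(E ^^ Suc (Suc 0)) x y" using assms(3,4) by auto
    then show ?thesis by (simp add: numeral_2_eq_2)
  qed
  have "(LEAST n. (E ^^ n) x y) = 2"
  proof (rule Least_equality)
    show "(E ^^ 2) x y" by (rule p2)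
  next
    fix m assume "(E ^^ m) x y"
    then show "2 \<le> m" using assms(1,2)
      by (cases m; cases "m - 1"; auto)
  qed
  then show ?thesis using p2 unfolding gdist_def
    by (auto simp: numeral_eq_enat)
qed

lemma gdist_le1I: "x = y \<or> E x y \<Longrightarrow> gdist E x y \<le> 1"
proof -
  assume a: "x = y \<or> E x y"
  then have p: "(E ^^ (if x = y then 0 else 1)) x y" by auto
  then have ex: "\<exists>n. (E ^^ n) x y" by blast
  have "(LEAST n. (E ^^ n) x y) \<le> (if x = y then 0 else 1)"
    by (rule Least_le) (rule p)
  then have "(LEAST n. (E ^^ n) x y) \<le> 1" by (auto split: if_splits)
  then show ?thesis using ex unfolding gdist_def by (simp add: one_enat_def)
qed

theorem lemma4:
  fixes P :: "(real^'n) set" and V A :: "(real^'n) set"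
    and E :: "real^'n \<Rightarrow> real^'n \<Rightarrow> bool"
  assumes "polytope P" and "convex P"
    and "\<forall>x\<in>P. - x \<in> P"
    and "interior P \<noteq> {}"
    and "simple_graph V E"
    and "\<forall>x\<in>V. \<forall>y\<in>V. gdist E x y = 2 \<longrightarrow> poly_norm P (x - y) = 1"
    and "A \<subseteq> V"
    and "\<forall>x\<in>A. \<forall>y\<in>A. poly_norm P (x - y) \<noteq> 1"
  shows "\<exists>\<C>::(real^'n) set set. (\<forall>C\<in>\<C>. is_clique V E C) \<and> A = \<Union>\<C> \<and>
           (\<forall>C\<in>\<C>. \<forall>C'\<in>\<C>. C \<noteq> C' \<longrightarrow> closed_nbhd V E C \<inter> closed_nbhd V E C' = {})"
proof -
  define R where "R x y \<longleftrightarrow> x = y \<or> E x y" for x y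
  have sym: "E x y \<Longrightarrow> E y x" for x y using assms(5) unfolding simple_graph_def by blast
  have Rsym: "R x y \<Longrightarrow> R y x" for x y unfolding R_def using sym by blast
  have key: "R x y" if "x \<in> A" "y \<in> A" "R v x" "R v y" for x y v
  proof (rule ccontr)
    assume n: "\<not> R x y"
    then have "x \<noteq> y" "\<not> E x y" unfolding R_def by auto
    moreover have "v \<noteq> x" "v \<noteq> y" using n that Rsym unfolding R_def by auto
    then have "E x v" "E v y" using that sym unfolding R_def by auto
    ultimately have "gdist E x y = 2" by (rule gdist_2)
    then have "poly_norm P (x - y) = 1" using assms(6,7) that by blast
    then show False using assms(8) that by blast
  qed
  have trans: "R x z" if "x \<in> A" "z \<in> A" "R x y" "R y z" for x y z
    using key[OF that(1,2), of y] Rsym that by blast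
  define cls where "cls x = {y \<in> A. R x y}" for x
  define \<C> where "\<C> = cls ` A"
  have Rrefl: "R x x" for x unfolding R_def by simp
  have "\<forall>C\<in>\<C>. is_clique V E C"
  proof
    fix C assume "C \<in> \<C>"
    then obtain x where x: "x \<in> A" "C = cls x" unfolding \<C>_def by blast
    show "is_clique V E C" unfolding is_clique_def
    proof (intro conjI ballI impI)
      show "C \<subseteq> V" using x assms(7) unfolding cls_def by auto
    next
      fix y z assume "y \<in> C" "z \<in> C" "y \<noteq> z"
      then have "R y z" using key[of y z x] x unfolding cls_def by auto
      then show "E y z" using \<open>y \<noteq> z\<close> unfolding R_def by auto
    qed
  qed
  moreover have "A = \<Union>\<C>" unfolding \<C>_def cls_def using Rrefl by auto
  moreover have "\<forall>C\<in>\<C>. \<forall>C'\<in>\<C>. C \<noteq> C' \<longrightarrow> closed_nbhd V E C \<inter> closed_nbhd V E C' = {}"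
  proof (intro ballI impI)
    fix C C' assume "C \<in> \<C>" "C' \<in> \<C>" "C \<noteq> C'"
    then obtain x x' where x: "x \<in> A" "C = cls x" "x' \<in> A" "C' = cls x'"
      unfolding \<C>_def by blast
    show "closed_nbhd V E C \<inter> closed_nbhd V E C' = {}"
    proof (rule ccontr)
      assume "closed_nbhd V E C \<inter> closed_nbhd V E C' \<noteq> {}"
      then obtain v c c' where v: "c \<in> C" "c' \<in> C'" "gdist E v c \<le> 1" "gdist E v c' \<le> 1"
        unfolding closed_nbhd_def by blast
      have "R v c" "R v c'" using gdist_le1[OF v(3)] gdist_le1[OF v(4)] unfolding R_def by auto
      moreover have cA: "c \<in> A" "c' \<in> A" "R x c" "R x' c'" using v x unfolding cls_def by auto
      ultimately have "R c c'" using key by blast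
      then have "R x x'" using trans cA x Rsym by meson
      then have "cls x = cls x'" unfolding cls_def using trans Rsym x by blast
      then show False using x \<open>C \<noteq> C'\<close> by simp
    qed
  qed
  ultimately show ?thesis by blast
qed

end
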